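(* Let $f:\{0,1\}^n\to\{0,1\}$ be a boolean function that depends on all $n$ input bits and satisfies $Q_E^{na}(f)=n/2$. Then there exists $x\in\{0,1\}^n$ such that $d(x,y)=n/2$ for all $y\in S_f^\perp$.
   Context: Addition of bit strings is in $\mathbb Z_2^n$ (bitwise mod 2). A function $f$ depends on bit $i$ if there is an $x$ with $f(x)\ne f(x+e_i)$, where $e_i$ is the bit string with 1 in position $i$ and 0 elsewhere. $S_f:=\{z\in\{0,1\}^n: f(x)=f(x+z)\ \text{for all } x\}$, a subspace of $\mathbb F_2^n$; $S^\perp=\{x: x\cdot s=0\bmod 2 \text{ for all } s\in S\}$. $d(x,y)$ is the Hamming distance. Nonadaptive exact quantum query model: let $\mathcal H_{\rm in}$ have orthonormal basis $|0\rangle,\dots,|n\rangle$ and let the oracle $O_x$ act by $|i\rangle\mapsto(-1)^{x_i}|i\rangle$ with convention $x_0=0$. A nonadaptive quantum algorithm making $k$ queries consists of an input-independent state $|\psi\rangle\in\mathcal H_{\rm in}^{\otimes k}\otimes\mathcal H_{\rm work}$ (with $\mathcal H_{\rm work}$ a finite-dimensional workspace), to which $O_x^{\otimes k}\otimes I$ is applied, followed by an input-independent two-outcome measurement with outcomes labelled $0,1$. It computes $f$ exactly if for every $x$ the outcome is $f(x)$ with probability $1$. $Q_E^{na}(f)$ is the minimum such $k$. *)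

theory Defs
  imports Complex_Main
begin

text \<open>Bit strings in {0,1}^n are boolean lists of length n (True = 1).
  Bit i of the paper (1 \<le> i \<le> n) is list position i-1.
  A boolean function is f :: bool list \<Rightarrow> bool, only its values on lists of
  length n matter.\<close>

definition bitstrings :: "nat \<Rightarrow> bool list set" where
  "bitstrings n = {x. length x = n}"

definition xor_bits :: "bool list \<Rightarrow> bool list \<Rightarrow> bool list" where
  "xor_bits x y = map2 (\<noteq>) x y"

definition unit_bits :: "nat \<Rightarrow> nat \<Rightarrow> bool list" where
  "unit_bits n i = map (\<lambda>j. j = i) [0..<n]"

definition depends_on :: "nat \<Rightarrow> (bool list \<Rightarrow> bool) \<Rightarrow> nat \<Rightarrow> bool" where
  "depends_on n f i \<longleftrightarrow> (\<exists>x\<in>bitstrings n. f x \<noteq> f (xor_bits x (unit_bits n i)))"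

definition depends_on_all :: "nat \<Rightarrow> (bool list \<Rightarrow> bool) \<Rightarrow> bool" where
  "depends_on_all n f \<longleftrightarrow> (\<forall>i<n. depends_on n f i)"

definition S_f :: "nat \<Rightarrow> (bool list \<Rightarrow> bool) \<Rightarrow> bool list set" where
  "S_f n f = {z\<in>bitstrings n. \<forall>x\<in>bitstrings n. f x = f (xor_bits x z)}"

definition dot_bits :: "bool list \<Rightarrow> bool list \<Rightarrow> nat" where
  "dot_bits x s = card {i. i < length x \<and> x ! i \<and> s ! i}"

definition perp :: "nat \<Rightarrow> bool list set \<Rightarrow> bool list set" where
  "perp n S = {x\<in>bitstrings n. \<forall>s\<in>S. even (dot_bits x s)}"

definition hamming :: "bool list \<Rightarrow> bool list \<Rightarrow> nat" where
  "hamming x y = card {i. i < length x \<and> x ! i \<noteq> y ! i}"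

text \<open>H_in has basis |0>,...,|n>. The space H_in^{\<otimes>k} \<otimes> H_work (with
  H_work = C^m, m \<ge> 1) has orthonormal basis indexed by pairs (is, w)
  with is a list of length k of query indices in {0..n} and w < m.
  Vectors and operators are functions on this finite index set.\<close>

definition idx :: "nat \<Rightarrow> nat \<Rightarrow> nat \<Rightarrow> (nat list \<times> nat) set" where
  "idx n k m = {(is, w). length is = k \<and> set is \<subseteq> {0..n} \<and> w < m}"

text \<open>Oracle O_x: |i> \<mapsto> (-1)^{x_i}, x_0 = 0, x_i = bit i (list position i-1).\<close>
definition oracle_bit :: "bool list \<Rightarrow> nat \<Rightarrow> bool" where
  "oracle_bit x i = (i \<noteq> 0 \<and> x ! (i - 1))"

text \<open>Diagonal entry of O_x^{\<otimes>k} \<otimes> I at basis vector (is, w).\<close>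
definition query_phase :: "bool list \<Rightarrow> nat list \<Rightarrow> complex" where
  "query_phase x is = (\<Prod>i\<leftarrow>is. if oracle_bit x i then -1 else 1)"

definition query_state ::
  "bool list \<Rightarrow> (nat list \<times> nat \<Rightarrow> complex) \<Rightarrow> (nat list \<times> nat \<Rightarrow> complex)" where
  "query_state x \<psi> = (\<lambda>(is, w). query_phase x is * \<psi> (is, w))"

definition sq_norm :: "'i set \<Rightarrow> ('i \<Rightarrow> complex) \<Rightarrow> real" where
  "sq_norm I v = (\<Sum>a\<in>I. (cmod (v a))\<^sup>2)"

definition qform :: "'i set \<Rightarrow> ('i \<Rightarrow> 'i \<Rightarrow> complex) \<Rightarrow> ('i \<Rightarrow> complex) \<Rightarrow> complex" where
  "qform I M v = (\<Sum>a\<in>I. \<Sum>b\<in>I. cnj (v a) * M a b * v b)"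

text \<open>A two-outcome measurement is a POVM {I - M, M} (outcome 0, outcome 1),
  i.e. 0 \<le> M \<le> I as operators. (Over C, real nonnegative quadratic form
  forces M to be Hermitian.)\<close>
definition povm_effect :: "'i set \<Rightarrow> ('i \<Rightarrow> 'i \<Rightarrow> complex) \<Rightarrow> bool" where
  "povm_effect I M \<longleftrightarrow> (\<forall>v. qform I M v \<in> \<real> \<and> 0 \<le> Re (qform I M v)
                                 \<and> Re (qform I M v) \<le> sq_norm I v)"

definition prob_one :: "'i set \<Rightarrow> ('i \<Rightarrow> 'i \<Rightarrow> complex) \<Rightarrow> ('i \<Rightarrow> complex) \<Rightarrow> real" where
  "prob_one I M v = Re (qform I M v)"

definition na_exact_computes ::
  "nat \<Rightarrow> (bool list \<Rightarrow> bool) \<Rightarrow> nat \<Rightarrow> nat \<Rightarrow> (nat list \<times> nat \<Rightarrow> complex)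
     \<Rightarrow> (nat list \<times> nat \<Rightarrow> nat list \<times> nat \<Rightarrow> complex) \<Rightarrow> bool" where
  "na_exact_computes n f k m \<psi> M \<longleftrightarrow>
     0 < m \<and> sq_norm (idx n k m) \<psi> = 1 \<and> povm_effect (idx n k m) M \<and>
     (\<forall>x\<in>bitstrings n. prob_one (idx n k m) M (query_state x \<psi>) = (if f x then 1 else 0))"

definition QE_na :: "nat \<Rightarrow> (bool list \<Rightarrow> bool) \<Rightarrow> nat" where
  "QE_na n f = (LEAST k. \<exists>m \<psi> M. na_exact_computes n f k m \<psi> M)"

end

theory Submission
  imports Defs
begin


definition sd :: "bool list \<Rightarrow> bool list \<Rightarrow> real" where
  "sd z v = (\<Prod>i<length z. if z!i \<and> v!i then -1 else 1)"

definition wt :: "bool list \<Rightarrow> nat" where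
  "wt v = card {i. i < length v \<and> v!i}"

fun par :: "nat \<Rightarrow> nat list \<Rightarrow> bool list" where
  "par n [] = replicate n False"
| "par n (i#js) = (if i = 0 then par n js else xor_bits (unit_bits n (i-1)) (par n js))"

lemma len_xor[simp]: "length (xor_bits x y) = min (length x) (length y)"
  by (simp add: xor_bits_def)
lemma nth_xor[simp]: "i < length x \<Longrightarrow> i < length y \<Longrightarrow> xor_bits x y ! i = (x!i \<noteq> y!i)"
  by (simp add: xor_bits_def)
lemma len_unit[simp]: "length (unit_bits n i) = n"
  by (simp add: unit_bits_def)
lemma nth_unit[simp]: "j < n \<Longrightarrow> unit_bits n i ! j = (j = i)"
  by (simp add: unit_bits_def)
lemma len_par[simp]: "length (par n js) = n"
  by (induction js) auto

lemma xor_xor: "length x = n \<Longrightarrow> length y = n \<Longrightarrow> xor_bits x (xor_bits x y) = y"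
  by (intro nth_equalityI) auto
lemma xor_eq_zero: "length x = n \<Longrightarrow> length y = n \<Longrightarrow> (xor_bits x y = replicate n False) = (x = y)"
  by (auto simp: list_eq_iff_nth_eq)

lemma sd_mult1: "length x = n \<Longrightarrow> length y = n \<Longrightarrow> sd x v * sd y v = sd (xor_bits x y) v"
  unfolding sd_def by (auto simp: prod.distrib[symmetric] intro!: prod.cong)

lemma sd_mult2: "length z = n \<Longrightarrow> length u = n \<Longrightarrow> length v = n \<Longrightarrow> sd z u * sd z v = sd z (xor_bits u v)"
  unfolding sd_def by (auto simp: prod.distrib[symmetric] intro!: prod.cong)

lemma sd_sym: "length z = length v \<Longrightarrow> sd z v = sd v z"
  unfolding sd_def by (auto intro!: prod.cong)

lemma sd_unit: "i < n \<Longrightarrow> length v = n \<Longrightarrow> sd (unit_bits n i) v = (if v!i then -1 else 1)"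
proof -
  assume a: "i < n" "length v = n"
  have "sd (unit_bits n i) v = (\<Prod>j<n. if j = i then (if v!i then -1 else 1) else 1)"
    unfolding sd_def using a by (intro prod.cong) auto
  also have "\<dots> = (if v!i then -1 else 1)" using a by (simp add: prod.delta)
  finally show ?thesis .
qed

lemma sd_zero: "sd z (replicate (length z) False) = 1"
  unfolding sd_def by simp

lemma sd_dot: "length z = length y \<Longrightarrow> sd z y = (-1) ^ dot_bits y z"
proof -
  assume a: "length z = length y"
  have "sd z y = (\<Prod>i\<in>{..<length z} \<inter> {i. z!i \<and> y!i}. -1) * (\<Prod>i\<in>{..<length z} \<inter> - {i. z!i \<and> y!i}. 1)"
    unfolding sd_def by (rule prod.If_cases) simp
  also have "\<dots> = (-1) ^ card ({..<length z} \<inter> {i. z!i \<and> y!i})" by simp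
  also have "{..<length z} \<inter> {i. z!i \<and> y!i} = {i. i < length y \<and> y!i \<and> z!i}" using a by auto
  finally show ?thesis by (simp add: dot_bits_def)
qed

lemma sd_Cons: "sd (a#z) (b#v) = (if a \<and> b then -1 else 1) * sd z v"
  unfolding sd_def by (simp add: prod.lessThan_Suc_shift del: prod.lessThan_Suc)

lemma bitstrings_Suc: "bitstrings (Suc n) = (\<lambda>(b,v). b#v) ` (UNIV \<times> bitstrings n)"
  unfolding bitstrings_def by (auto simp: length_Suc_conv image_iff)

lemma finite_bitstrings[simp]: "finite (bitstrings n)"
  using finite_lists_length_eq[of "UNIV::bool set" n] by (simp add: bitstrings_def)

lemma card_bitstrings: "card (bitstrings n) = 2 ^ n"
  using card_lists_length_eq[of "UNIV::bool set" n] by (simp add: bitstrings_def)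

lemma sum_sd: "length w = n \<Longrightarrow> (\<Sum>z\<in>bitstrings n. sd z w) = (if w = replicate n False then 2^n else 0)"
proof (induction n arbitrary: w)
  case 0
  then show ?case by (simp add: bitstrings_def sd_def)
next
  case (Suc n)
  then obtain c w' where w: "w = c # w'" "length w' = n" by (auto simp: length_Suc_conv)
  have inj: "inj_on (\<lambda>(b,v). b#v) (UNIV \<times> bitstrings n)" by (auto simp: inj_on_def)
  have "(\<Sum>z\<in>bitstrings (Suc n). sd z w) = (\<Sum>(b,v)\<in>UNIV \<times> bitstrings n. sd (b#v) w)"
    unfolding bitstrings_Suc by (subst sum.reindex[OF inj]) (simp add: case_prod_unfold)
  also have "\<dots> = (\<Sum>b\<in>UNIV. \<Sum>v\<in>bitstrings n. sd (b#v) w)"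
    by (rule sum.cartesian_product[symmetric])
  also have "\<dots> = (1 + (if c then -1 else 1)) * (\<Sum>v\<in>bitstrings n. sd v w')"
    using w by (simp add: UNIV_bool sd_Cons sum_distrib_left[symmetric] sum_negf algebra_simps)
  finally show ?case using Suc.IH[OF w(2)] w by auto
qed




lemma qp_sd: "length x = n \<Longrightarrow> set js \<subseteq> {0..n} \<Longrightarrow> query_phase x js = of_real (sd x (par n js))"
proof (induction js)
  case Nil
  then show ?case using sd_zero[of x] by (simp add: query_phase_def)
next
  case (Cons i js)
  have IH: "query_phase x js = of_real (sd x (par n js))" using Cons by auto
  have qc: "query_phase x (i#js) = (if oracle_bit x i then -1 else 1) * query_phase x js"
    by (simp add: query_phase_def)
  show ?case
  proof (cases "i = 0")
    case True
    then show ?thesis using qc IH by (simp add: oracle_bit_def)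
  next
    case False
    with Cons.prems have i: "i - 1 < n" by auto
    have lx: "length x = n" using Cons.prems by simp
    have e1: "sd x (unit_bits n (i-1)) * sd x (par n js) = sd x (xor_bits (unit_bits n (i-1)) (par n js))"
      by (rule sd_mult2[OF lx]) simp_all
    have e2: "sd x (unit_bits n (i-1)) = sd (unit_bits n (i-1)) x"
      using lx by (intro sd_sym) simp
    have e3: "sd (unit_bits n (i-1)) x = (if x!(i-1) then -1 else 1)"
      by (rule sd_unit[OF i lx])
    have e4: "par n (i#js) = xor_bits (unit_bits n (i-1)) (par n js)" using False by simp
    have e5: "oracle_bit x i = x!(i-1)" using False by (simp add: oracle_bit_def)
    show ?thesis unfolding qc IH e4 e1[symmetric] e2 e3 e5 by simp
  qed
qed

lemma wt_xor: "length u = n \<Longrightarrow> length v = n \<Longrightarrow> wt (xor_bits u v) \<le> wt u + wt v"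
proof -
  assume a: "length u = n" "length v = n"
  have "{i. i < length (xor_bits u v) \<and> xor_bits u v ! i} \<subseteq> {i. i < length u \<and> u!i} \<union> {i. i < length v \<and> v!i}"
    using a by auto
  then have "wt (xor_bits u v) \<le> card ({i. i < length u \<and> u!i} \<union> {i. i < length v \<and> v!i})"
    unfolding wt_def by (intro card_mono) auto
  also have "\<dots> \<le> wt u + wt v" unfolding wt_def by (rule card_Un_le)
  finally show ?thesis .
qed

lemma wt_unit: "wt (unit_bits n j) \<le> 1"
proof -
  have "{i. i < length (unit_bits n j) \<and> unit_bits n j ! i} \<subseteq> {j}" by auto
  then have "wt (unit_bits n j) \<le> card {j}" unfolding wt_def by (intro card_mono) auto
  then show ?thesis by simp
qed

lemma wt_par: "wt (par n js) \<le> length js"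
proof (induction js)
  case Nil
  then show ?case by (simp add: wt_def)
next
  case (Cons i js)
  show ?case
  proof (cases "i = 0")
    case True
    then show ?thesis using Cons.IH by simp
  next
    case False
    then have "wt (par n (i#js)) = wt (xor_bits (unit_bits n (i-1)) (par n js))" by simp
    also have "\<dots> \<le> wt (unit_bits n (i-1)) + wt (par n js)" by (rule wt_xor) simp_all
    also have "\<dots> \<le> 1 + length js" using wt_unit[of n "i-1"] Cons.IH by linarith
    finally show ?thesis by simp
  qed
qed

lemma sum_unit: "length v = n \<Longrightarrow> (\<Sum>i<n. sd (unit_bits n i) v) = real n - 2 * real (wt v)"
proof -
  assume a: "length v = n"
  have "(\<Sum>i<n. sd (unit_bits n i) v) = (\<Sum>i<n. 1 - 2 * (if v!i then 1 else 0))"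
    using a by (intro sum.cong) (auto simp: sd_unit)
  also have "\<dots> = real n - 2 * (\<Sum>i<n. (if v!i then 1 else 0))"
    by (simp add: sum_subtractf sum_distrib_left)
  also have "(\<Sum>i<n. (if v!i then 1 else 0)::real) = real (card {i\<in>{..<n}. v!i})"
    by (simp add: sum.inter_filter[symmetric])
  also have "{i\<in>{..<n}. v!i} = {i. i < length v \<and> v!i}" using a by auto
  finally show ?thesis by (simp add: wt_def)
qed

lemma hamming_wt: "length x = length y \<Longrightarrow> hamming x y = wt (xor_bits x y)"
  unfolding hamming_def wt_def by (intro arg_cong[where f=card]) auto

lemma qform_gram:
  assumes "finite I" "finite Y"
  shows "qform I (\<lambda>a b. \<Sum>y\<in>Y. cnj (u y a) * u y b) v = of_real (\<Sum>y\<in>Y. (cmod (\<Sum>b\<in>I. u y b * v b))\<^sup>2)"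
proof -
  have "qform I (\<lambda>a b. \<Sum>y\<in>Y. cnj (u y a) * u y b) v = (\<Sum>a\<in>I. \<Sum>b\<in>I. \<Sum>y\<in>Y. cnj (u y a) * cnj (v a) * (u y b * v b))"
    unfolding qform_def by (simp add: sum_distrib_left sum_distrib_right ac_simps)
  also have "\<dots> = (\<Sum>a\<in>I. \<Sum>y\<in>Y. \<Sum>b\<in>I. cnj (u y a) * cnj (v a) * (u y b * v b))"
    by (intro sum.cong refl sum.swap)
  also have "\<dots> = (\<Sum>y\<in>Y. \<Sum>a\<in>I. \<Sum>b\<in>I. cnj (u y a) * cnj (v a) * (u y b * v b))"
    by (rule sum.swap)
  also have "\<dots> = (\<Sum>y\<in>Y. of_real ((cmod (\<Sum>b\<in>I. u y b * v b))\<^sup>2))"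
  proof (intro sum.cong refl)
    fix y
    have "of_real ((cmod (\<Sum>b\<in>I. u y b * v b))\<^sup>2) = cnj (\<Sum>b\<in>I. u y b * v b) * (\<Sum>b\<in>I. u y b * v b)"
      by (subst complex_norm_square) (rule mult.commute)
    also have "\<dots> = (\<Sum>a\<in>I. cnj (u y a) * cnj (v a)) * (\<Sum>b\<in>I. u y b * v b)"
      by simp
    also have "\<dots> = (\<Sum>a\<in>I. \<Sum>b\<in>I. cnj (u y a) * cnj (v a) * (u y b * v b))"
      by (rule sum_product)
    finally show "(\<Sum>a\<in>I. \<Sum>b\<in>I. cnj (u y a) * cnj (v a) * (u y b * v b)) = of_real ((cmod (\<Sum>b\<in>I. u y b * v b))\<^sup>2)" by simp
  qed
  finally show ?thesis by simp
qed

lemma qform_add: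
  "qform I M (\<lambda>a. u a + t * w a) = qform I M u + t * (\<Sum>a\<in>I. \<Sum>b\<in>I. cnj (u a) * M a b * w b)
     + cnj t * (\<Sum>a\<in>I. \<Sum>b\<in>I. cnj (w a) * M a b * u b) + cnj t * t * qform I M w"
proof -
  have pt: "cnj (u a + t * w a) * M a b * (u b + t * w b) = cnj (u a) * M a b * u b + t * (cnj (u a) * M a b * w b)
     + cnj t * (cnj (w a) * M a b * u b) + cnj t * t * (cnj (w a) * M a b * w b)" for a b
    by (simp add: algebra_simps)
  show ?thesis unfolding qform_def pt by (simp only: sum.distrib sum_distrib_left[symmetric])
qed

lemma cmod_add_sq: "(cmod (x + t * y))\<^sup>2 = (cmod x)\<^sup>2 + 2 * Re (t * (cnj x * y)) + (cmod t)\<^sup>2 * (cmod y)\<^sup>2"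
  unfolding cmod_power2 by (simp add: power2_eq_square algebra_simps)

lemma sqn_add:
  "sq_norm I (\<lambda>a. u a + t * w a) = sq_norm I u + 2 * Re (t * (\<Sum>a\<in>I. cnj (u a) * w a)) + (cmod t)\<^sup>2 * sq_norm I w"
  unfolding sq_norm_def cmod_add_sq by (simp add: sum.distrib sum_distrib_left Re_sum)

lemma povm_orth:
  assumes "povm_effect I M" "Re (qform I M u) = 1" "Re (qform I M w) = 0"
    "sq_norm I u = 1" "sq_norm I w = 1"
  shows "(\<Sum>a\<in>I. cnj (u a) * w a) = 0"
proof -
  define b1 where "b1 = (\<Sum>a\<in>I. \<Sum>b\<in>I. cnj (u a) * M a b * w b)"
  define b2 where "b2 = (\<Sum>a\<in>I. \<Sum>b\<in>I. cnj (w a) * M a b * u b)"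
  define d where "d = (\<Sum>a\<in>I. cnj (u a) * w a)"
  define X where "X t = Re (t * b1 + cnj t * b2)" for t
  have cc: "cnj t * t = of_real ((cmod t)\<^sup>2)" for t by (subst complex_norm_square) (rule mult.commute)
  have ReA: "Re (qform I M (\<lambda>a. u a + t * w a)) = 1 + X t" for t
    unfolding qform_add b1_def[symmetric] b2_def[symmetric] X_def cc using assms(2,3) by simp
  have pe: "\<And>v. Re (qform I M v) \<le> sq_norm I v" "\<And>v. 0 \<le> Re (qform I M v)"
    using assms(1) unfolding povm_effect_def by auto
  have nonneg: "0 \<le> 1 + X t" for t using pe(2)[of "\<lambda>a. u a + t * w a"] ReA[of t] by simp
  have Xs: "X (of_real s * t) = s * X t" for s t unfolding X_def by (simp add: algebra_simps)
  have Xneg: "X (- t) = - X t" for t unfolding X_def by simp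
  have Xge: "0 \<le> X t" for t
  proof (rule ccontr)
    assume "\<not> 0 \<le> X t"
    then have neg: "X t < 0" by simp
    have "X (of_real (2 / - X t) * t) = -2" unfolding Xs using neg by simp
    then show False using nonneg[of "of_real (2 / - X t) * t"] by simp
  qed
  have X0: "X t = 0" for t using Xge[of t] Xge[of "-t"] Xneg[of t] by simp
  have "1 \<le> sq_norm I (\<lambda>a. u a + (- cnj d) * w a)"
    using pe(1)[of "\<lambda>a. u a + (- cnj d) * w a"] ReA[of "- cnj d"] X0[of "- cnj d"] by simp
  also have "\<dots> = 1 - (cmod d)\<^sup>2"
    unfolding sqn_add d_def[symmetric] using assms(4,5)
    using cmod_power2[of d] by (simp add: cc[of d, simplified mult.commute] complex_mod_cnj power2_eq_square)
  finally have "(cmod d)\<^sup>2 \<le> 0" by simp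
  then show ?thesis unfolding d_def[symmetric] by simp
qed



definition enc :: "nat \<Rightarrow> bool list \<Rightarrow> nat list" where
  "enc n b = map (\<lambda>j. if b!j then Suc j else 0) [0..<n]"

definition dec :: "nat list \<Rightarrow> bool list" where
  "dec js = map (\<lambda>i. i \<noteq> 0) js"

lemma dec_enc: "length b = n \<Longrightarrow> dec (enc n b) = b"
  unfolding dec_def enc_def by (intro nth_equalityI) auto

lemma enc_idx: "length b = n \<Longrightarrow> (enc n b, 0) \<in> idx n n 1"
  unfolding idx_def enc_def by auto

lemma qp_enc: "length x = n \<Longrightarrow> length b = n \<Longrightarrow> query_phase x (enc n b) = of_real (sd x b)"
proof -
  assume a: "length x = n" "length b = n"
  have "query_phase x (enc n b) = (\<Prod>j\<leftarrow>[0..<n]. (if oracle_bit x (if b!j then Suc j else 0) then -1 else 1))"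
    unfolding query_phase_def enc_def by (simp add: comp_def)
  also have "\<dots> = (\<Prod>j\<in>{0..<n}. (if oracle_bit x (if b!j then Suc j else 0) then -1 else 1))"
    by (simp add: prod.distinct_set_conv_list[symmetric])
  also have "\<dots> = (\<Prod>j<n. of_real (if x!j \<and> b!j then -1 else 1))"
    by (intro prod.cong) (auto simp: oracle_bit_def)
  also have "\<dots> = of_real (sd x b)" unfolding sd_def using a by simp
  finally show ?thesis .
qed


lemma re_cnj_sq: "Re (cnj z * z) = (cmod z)\<^sup>2"
  unfolding cmod_power2 by (simp add: power2_eq_square)

lemma orth2: "p \<in> bitstrings n \<Longrightarrow> q \<in> bitstrings n \<Longrightarrow>
  (\<Sum>y\<in>bitstrings n. sd y p * sd y q) = (if p = q then 2^n else 0)"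
proof -
  assume a: "p \<in> bitstrings n" "q \<in> bitstrings n"
  have "(\<Sum>y\<in>bitstrings n. sd y p * sd y q) = (\<Sum>y\<in>bitstrings n. sd y (xor_bits p q))"
    using a by (intro sum.cong refl sd_mult2) (auto simp: bitstrings_def)
  also have "\<dots> = (if xor_bits p q = replicate n False then 2^n else 0)"
    using a by (intro sum_sd) (simp add: bitstrings_def)
  finally show ?thesis using xor_eq_zero[of p n q] a by (simp add: bitstrings_def)
qed

lemma finite_idx: "finite (idx n k m)"
proof -
  have "idx n k m \<subseteq> {js. set js \<subseteq> {0..n} \<and> length js = k} \<times> {..<m}" unfolding idx_def by auto
  then show ?thesis by (rule finite_subset) (intro finite_SigmaI finite_lists_length_eq, auto)
qed

lemma exists_alg: "\<exists>k m \<psi> M. na_exact_computes n f k m \<psi> M"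
proof -
  define I where "I = idx n n 1"
  define E where "E = (\<lambda>b. (enc n b, 0::nat))"
  define T where "T = E ` bitstrings n"
  define c :: complex where "c = of_real (1 / sqrt (2^n))"
  define \<psi> where "\<psi> a = (if a \<in> T then c else 0)" for a
  define u where "u y a = (if a \<in> T then of_real (sd y (dec (fst a))) * c else 0)" for y a
  define Y where "Y = {y \<in> bitstrings n. f y}"
  define M where "M a b = (\<Sum>y\<in>Y. cnj (u y a) * u y b)" for a b
  define G where "G Y' v = (\<Sum>y\<in>Y'. (cmod (\<Sum>b\<in>I. u y b * v b))\<^sup>2)" for Y' v
  have finI: "finite I" unfolding I_def by (rule finite_idx)
  have TI: "T \<subseteq> I" unfolding T_def E_def I_def using enc_idx by (auto simp: bitstrings_def)
  have injE: "inj_on E (bitstrings n)"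
  proof (rule inj_onI)
    fix p q assume "p \<in> bitstrings n" "q \<in> bitstrings n" "E p = E q"
    then have "dec (enc n p) = dec (enc n q)" "length p = n" "length q = n"
      by (auto simp: E_def bitstrings_def)
    then show "p = q" by (simp add: dec_enc)
  qed
  have cnjc: "cnj c = c" unfolding c_def by simp
  have ccr: "c * c = of_real (1 / 2^n)" unfolding c_def
    by (simp add: of_real_mult[symmetric] real_sqrt_mult[symmetric] del: of_real_mult)
  have sumT: "(\<Sum>a\<in>T. F a) = (\<Sum>b\<in>bitstrings n. F (E b))" for F :: "_ \<Rightarrow> complex"
    unfolding T_def by (rule sum.reindex[OF injE, unfolded comp_def])
  have sumI: "(\<Sum>a\<in>I. F a) = (\<Sum>a\<in>T. F a)" if "\<forall>a\<in>I - T. F a = 0" for F :: "_ \<Rightarrow> complex"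
    using that by (intro sum.mono_neutral_right finI TI) auto
  have uE: "u y (E b) = of_real (sd y b) * c" if "b \<in> bitstrings n" for y b
    using that unfolding u_def T_def E_def by (auto simp: dec_enc bitstrings_def)
  have Y_sub: "Y \<subseteq> bitstrings n" unfolding Y_def by auto
  have norm: "sq_norm I \<psi> = 1"
  proof -
    have "sq_norm I \<psi> = (\<Sum>a\<in>I. if a \<in> T then (cmod c)\<^sup>2 else 0)"
      unfolding sq_norm_def \<psi>_def by (intro sum.cong) auto
    also have "\<dots> = (\<Sum>a\<in>T. (cmod c)\<^sup>2)"
      using TI finI by (simp add: sum.If_cases Int_absorb1)
    also have "\<dots> = real (card T) * (1 / sqrt (2^n))\<^sup>2" unfolding c_def norm_of_real by simp
    also have "card T = 2^n" unfolding T_def using card_image[OF injE] card_bitstrings by simp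
    finally show ?thesis by (simp add: power_divide)
  qed
  have Mall: "(\<Sum>y\<in>bitstrings n. cnj (u y a) * u y b) = (if a \<in> T \<and> a = b then 1 else 0)" for a b
  proof (cases "a \<in> T \<and> b \<in> T")
    case True
    then obtain p q where pq: "p \<in> bitstrings n" "q \<in> bitstrings n" "a = E p" "b = E q"
      unfolding T_def by auto
    have "(\<Sum>y\<in>bitstrings n. cnj (u y a) * u y b) = (\<Sum>y\<in>bitstrings n. of_real (sd y p * sd y q) * (c * c))"
      using pq by (intro sum.cong refl) (simp add: uE cnjc)
    also have "\<dots> = of_real (\<Sum>y\<in>bitstrings n. sd y p * sd y q) * (c * c)"
      by (simp add: sum_distrib_right)
    also have "\<dots> = (if p = q then 1 else 0)" unfolding orth2[OF pq(1,2)] ccr by simp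
    also have "(p = q) = (a = b)" using pq injE by (auto simp: inj_on_def)
    finally show ?thesis using True by simp
  next
    case False
    then have z: "cnj (u y a) * u y b = 0" for y unfolding u_def by auto
    have "(\<Sum>y\<in>bitstrings n. cnj (u y a) * u y b) = 0" unfolding z by simp
    then show ?thesis using False by auto
  qed
  have povm: "povm_effect I M"
    unfolding povm_effect_def
  proof (intro allI conjI)
    fix v
    have q: "qform I M v = of_real (G Y v)"
      unfolding M_def G_def by (rule qform_gram[OF finI finite_subset[OF Y_sub finite_bitstrings]])
    have qa: "qform I (\<lambda>a b. \<Sum>y\<in>bitstrings n. cnj (u y a) * u y b) v = of_real (G (bitstrings n) v)"
      unfolding G_def by (rule qform_gram[OF finI finite_bitstrings])
    have "qform I (\<lambda>a b. \<Sum>y\<in>bitstrings n. cnj (u y a) * u y b) v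
        = (\<Sum>a\<in>I. \<Sum>b\<in>I. cnj (v a) * (if a \<in> T \<and> a = b then 1 else 0) * v b)"
      unfolding qform_def Mall ..
    also have "\<dots> = (\<Sum>a\<in>I. if a \<in> T then cnj (v a) * v a else 0)"
      using finI by (intro sum.cong refl) (simp add: if_distrib if_distribR sum.delta cong: if_cong)
    finally have "G (bitstrings n) v = Re (\<Sum>a\<in>I. if a \<in> T then cnj (v a) * v a else 0)"
      using qa by (metis Re_complex_of_real)
    also have "\<dots> = (\<Sum>a\<in>I. if a \<in> T then (cmod (v a))\<^sup>2 else 0)"
      unfolding Re_sum by (intro sum.cong refl) (simp only: if_distrib[of Re] re_cnj_sq zero_complex.sel)
    also have "\<dots> \<le> sq_norm I v" unfolding sq_norm_def by (intro sum_mono) auto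
    finally have up: "G (bitstrings n) v \<le> sq_norm I v" .
    have "G Y v \<le> G (bitstrings n) v" unfolding G_def
      by (intro sum_mono2 finite_bitstrings Y_sub) auto
    then show "Re (qform I M v) \<le> sq_norm I v" using up q by simp
    show "qform I M v \<in> \<real>" using q by simp
    show "0 \<le> Re (qform I M v)" using q unfolding G_def by (simp add: sum_nonneg)
  qed
  have prob: "prob_one I M (query_state x \<psi>) = (if f x then 1 else 0)" if x: "x \<in> bitstrings n" for x
  proof -
    define v where "v = query_state x \<psi>"
    have vE: "v (E b) = of_real (sd x b) * c" if "b \<in> bitstrings n" for b
      using that x unfolding v_def query_state_def E_def \<psi>_def T_def
      by (auto simp: qp_enc bitstrings_def)
    have ip: "(\<Sum>b\<in>I. u y b * v b) = (if y = x then 1 else 0)" if y: "y \<in> bitstrings n" for y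
    proof -
      have "(\<Sum>b\<in>I. u y b * v b) = (\<Sum>b\<in>T. u y b * v b)"
        by (rule sumI) (auto simp: u_def)
      also have "\<dots> = (\<Sum>p\<in>bitstrings n. of_real (sd p y * sd p x) * (c * c))"
        unfolding sumT
      proof (intro sum.cong refl)
        fix p assume p: "p \<in> bitstrings n"
        have "sd y p = sd p y" "sd x p = sd p x"
          using p x y by (auto intro!: sd_sym simp: bitstrings_def)
        then show "u y (E p) * v (E p) = of_real (sd p y * sd p x) * (c * c)"
          using p by (simp add: uE vE)
      qed
      also have "\<dots> = of_real (\<Sum>p\<in>bitstrings n. sd p y * sd p x) * (c * c)"
        by (simp add: sum_distrib_right)
      also have "\<dots> = (if y = x then 1 else 0)" unfolding orth2[OF y x] ccr by simp
      finally show ?thesis .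
    qed
    have "G Y v = (\<Sum>y\<in>Y. if y = x then 1 else 0)"
      unfolding G_def using Y_sub by (intro sum.cong refl) (auto simp: ip)
    also have "\<dots> = (if f x then 1 else 0)"
      using x finite_subset[OF Y_sub finite_bitstrings] by (simp add: Y_def)
    finally show ?thesis unfolding prob_one_def v_def[symmetric]
      using qform_gram[OF finI finite_subset[OF Y_sub finite_bitstrings], of u v]
      unfolding M_def[symmetric] G_def[symmetric] by simp
  qed
  have "na_exact_computes n f n 1 \<psi> M"
    unfolding na_exact_computes_def I_def[symmetric] using norm povm prob by auto
  then show ?thesis by blast
qed



lemma xor_comm: "xor_bits x y = xor_bits y x"
  by (intro nth_equalityI) auto

lemma sd_sq: "sd z v * sd z v = 1"
  unfolding sd_def prod.distrib[symmetric] by (rule prod.neutral) auto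

theorem corollary7p6:
  fixes n :: nat and f :: "bool list \<Rightarrow> bool"
  assumes "depends_on_all n f"
    and "real (QE_na n f) = real n / 2"
  shows "\<exists>x\<in>bitstrings n. \<forall>y\<in>perp n (S_f n f). real (hamming x y) = real n / 2"
proof -
  define K where "K = QE_na n f"
  have nK: "n = 2 * K" using assms(2) unfolding K_def by linarith
  have "\<exists>m \<psi> M. na_exact_computes n f K m \<psi> M"
    unfolding K_def QE_na_def by (rule LeastI_ex) (rule exists_alg)
  then obtain m \<psi> M where alg: "na_exact_computes n f K m \<psi> M" by blast
  define I where "I = idx n K m"
  have norm: "sq_norm I \<psi> = 1" and povm: "povm_effect I M"
    and pr: "\<And>x. x \<in> bitstrings n \<Longrightarrow> prob_one I M (query_state x \<psi>) = (if f x then 1 else 0)"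
    using alg unfolding na_exact_computes_def I_def by auto
  have finI: "finite I" unfolding I_def by (rule finite_idx)
  define p where "p a = (cmod (\<psi> a))\<^sup>2" for a :: "nat list \<times> nat"
  define P where "P a = par n (fst a)" for a :: "nat list \<times> nat"
  define g where "g z = (\<Sum>a\<in>I. p a * sd z (P a))" for z
  have p0: "0 \<le> p a" for a unfolding p_def by simp
  have aI: "length (fst a) = K \<and> set (fst a) \<subseteq> {0..n}" if "a \<in> I" for a
    using that unfolding I_def idx_def by auto
  have Pbs: "P a \<in> bitstrings n" for a unfolding P_def bitstrings_def by simp
  have qs: "query_state x \<psi> a = of_real (sd x (P a)) * \<psi> a" if "x \<in> bitstrings n" "a \<in> I" for x a
  proof -
    obtain js w where a: "a = (js, w)" by (cases a)
    show ?thesis using that aI[OF that(2)] unfolding a query_state_def P_def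
      by (simp add: qp_sd[of x n] bitstrings_def)
  qed
  have cc: "cnj z * z = of_real ((cmod z)\<^sup>2)" for z by (subst complex_norm_square) (rule mult.commute)
  have nq: "sq_norm I (query_state x \<psi>) = 1" if x: "x \<in> bitstrings n" for x
  proof -
    have "sq_norm I (query_state x \<psi>) = sq_norm I \<psi>"
      unfolding sq_norm_def
    proof (intro sum.cong refl)
      fix a assume a: "a \<in> I"
      have "(cmod (query_state x \<psi> a))\<^sup>2 = (sd x (P a) * sd x (P a)) * (cmod (\<psi> a))\<^sup>2"
        unfolding qs[OF x a] norm_mult norm_of_real by (simp add: power2_eq_square)
      then show "(cmod (query_state x \<psi> a))\<^sup>2 = (cmod (\<psi> a))\<^sup>2" by (simp add: sd_sq)
    qed
    then show ?thesis using norm by simp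
  qed
  have inner: "(\<Sum>a\<in>I. cnj (query_state x \<psi> a) * query_state y \<psi> a) = of_real (g (xor_bits x y))"
    if x: "x \<in> bitstrings n" and y: "y \<in> bitstrings n" for x y
  proof -
    have "(\<Sum>a\<in>I. cnj (query_state x \<psi> a) * query_state y \<psi> a) = (\<Sum>a\<in>I. of_real (p a * sd (xor_bits x y) (P a)))"
    proof (intro sum.cong refl)
      fix a assume a: "a \<in> I"
      have "cnj (query_state x \<psi> a) * query_state y \<psi> a = of_real (sd x (P a) * sd y (P a)) * (cnj (\<psi> a) * \<psi> a)"
        unfolding qs[OF x a] qs[OF y a] by simp
      also have "sd x (P a) * sd y (P a) = sd (xor_bits x y) (P a)"
        using x y by (intro sd_mult1) (auto simp: bitstrings_def)
      finally show "cnj (query_state x \<psi> a) * query_state y \<psi> a = of_real (p a * sd (xor_bits x y) (P a))"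
        unfolding cc p_def by simp
    qed
    then show ?thesis unfolding g_def by simp
  qed
  have g0: "g z = 0" if z: "z \<in> bitstrings n" "z \<notin> S_f n f" for z
  proof -
    obtain x where x: "x \<in> bitstrings n" "f x \<noteq> f (xor_bits x z)"
      using z unfolding S_f_def by auto
    define y where "y = xor_bits x z"
    have y: "y \<in> bitstrings n" using x z unfolding y_def bitstrings_def by simp
    have xy: "xor_bits x y = z" using x z unfolding y_def bitstrings_def by (simp add: xor_xor)
    have fxy: "f x \<noteq> f y" using x unfolding y_def by simp
    have Re1: "Re (qform I M (query_state w \<psi>)) = (if f w then 1 else 0)" if "w \<in> bitstrings n" for w
      using pr[OF that] unfolding prob_one_def .
    show ?thesis
    proof (cases "f x")
      case True
      then have "f y = False" using fxy by simp
      then have "(\<Sum>a\<in>I. cnj (query_state x \<psi> a) * query_state y \<psi> a) = 0"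
        using True by (intro povm_orth[OF povm] nq x(1) y) (simp_all add: Re1 x(1) y)
      then show ?thesis using inner[OF x(1) y] xy by simp
    next
      case False
      then have "f y = True" using fxy by simp
      then have "(\<Sum>a\<in>I. cnj (query_state y \<psi> a) * query_state x \<psi> a) = 0"
        using False by (intro povm_orth[OF povm] nq x(1) y) (simp_all add: Re1 x(1) y)
      then show ?thesis using inner[OF y x(1)] xy by (simp add: xor_comm)
    qed
  qed
  have gunit: "g (unit_bits n i) = 0" if "i < n" for i
  proof (rule g0)
    show "unit_bits n i \<in> bitstrings n" by (simp add: bitstrings_def)
    show "unit_bits n i \<notin> S_f n f"
      using assms(1) that unfolding depends_on_all_def depends_on_def S_f_def by auto
  qed
  have "0 = (\<Sum>i<n. g (unit_bits n i))" using gunit by simp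
  also have "\<dots> = (\<Sum>a\<in>I. p a * (\<Sum>i<n. sd (unit_bits n i) (P a)))"
    unfolding g_def by (simp add: sum_distrib_left sum.swap[of _ "{..<n}"])
  also have "\<dots> = (\<Sum>a\<in>I. p a * (real n - 2 * real (wt (P a))))"
    using Pbs by (intro sum.cong refl) (simp add: sum_unit bitstrings_def)
  finally have s0: "(\<Sum>a\<in>I. p a * (real n - 2 * real (wt (P a)))) = 0" by simp
  have tnn: "0 \<le> p a * (real n - 2 * real (wt (P a)))" if "a \<in> I" for a
  proof -
    have "wt (P a) \<le> K" using wt_par[of n "fst a"] aI[OF that] unfolding P_def by simp
    then show ?thesis using p0[of a] nK by simp
  qed
  have wtP: "2 * wt (P a) = n" if "a \<in> I" "0 < p a" for a
  proof -
    have "p a * (real n - 2 * real (wt (P a))) = 0"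
      using s0 sum_nonneg_eq_0_iff[OF finI, of "\<lambda>a. p a * (real n - 2 * real (wt (P a)))"] tnn that(1)
      by blast
    then show ?thesis using that(2) by simp
  qed
  obtain a0 where a0: "a0 \<in> I" "0 < p a0"
  proof -
    have "(\<Sum>a\<in>I. p a) = 1" using norm unfolding sq_norm_def p_def .
    then have "\<exists>a\<in>I. p a \<noteq> 0"
    proof (rule contrapos_pp)
      assume "\<not> (\<exists>a\<in>I. p a \<noteq> 0)"
      then have "sum p I = 0" by (intro sum.neutral) auto
      then show "sum p I \<noteq> 1" by simp
    qed
    then obtain a where "a \<in> I" "p a \<noteq> 0" by blast
    then show ?thesis using that p0[of a] by (simp add: less_eq_real_def)
  qed
  define x0 where "x0 = P a0"
  have x0: "x0 \<in> bitstrings n" unfolding x0_def by (rule Pbs)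
  \<comment> \<open>Fourier inversion\<close>
  define F where "F v = (\<Sum>a\<in>I. if P a = v then p a else 0)" for v
  have four: "(\<Sum>z\<in>bitstrings n. g z * sd z v) = 2^n * F v" if v: "v \<in> bitstrings n" for v
  proof -
    have "(\<Sum>z\<in>bitstrings n. g z * sd z v) = (\<Sum>a\<in>I. p a * (\<Sum>z\<in>bitstrings n. sd z (P a) * sd z v))"
      unfolding g_def by (simp add: sum_distrib_left sum_distrib_right sum.swap[of _ "bitstrings n"] ac_simps)
    also have "\<dots> = (\<Sum>a\<in>I. p a * (if P a = v then 2^n else 0))"
      by (intro sum.cong refl) (simp add: orth2[OF Pbs v])
    also have "\<dots> = 2^n * F v" unfolding F_def sum_distrib_left by (intro sum.cong refl) simp
    finally show ?thesis .
  qed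
  have Ssub: "S_f n f \<subseteq> bitstrings n" unfolding S_f_def by auto
  have restr: "(\<Sum>z\<in>bitstrings n. g z * sd z v) = (\<Sum>z\<in>S_f n f. g z * sd z v)" for v
    by (rule sum.mono_neutral_right[OF finite_bitstrings Ssub]) (auto simp: g0)
  show ?thesis
  proof (intro bexI[OF _ x0] ballI)
    fix y assume y: "y \<in> perp n (S_f n f)"
    have ybs: "y \<in> bitstrings n" using y unfolding perp_def by auto
    have xy: "xor_bits x0 y \<in> bitstrings n" using x0 ybs by (simp add: bitstrings_def)
    have "(\<Sum>z\<in>S_f n f. g z * sd z (xor_bits x0 y)) = (\<Sum>z\<in>S_f n f. g z * sd z x0)"
    proof (intro sum.cong refl)
      fix z assume z: "z \<in> S_f n f"
      have zb: "z \<in> bitstrings n" using z Ssub by auto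
      have "sd z y = (-1) ^ dot_bits y z" using zb ybs by (intro sd_dot) (simp add: bitstrings_def)
      also have "even (dot_bits y z)" using y z unfolding perp_def by auto
      then have "(-1::real) ^ dot_bits y z = 1" by simp
      finally have "sd z y = 1" .
      moreover have "sd z x0 * sd z y = sd z (xor_bits x0 y)"
        using zb x0 ybs by (intro sd_mult2[of z n]) (auto simp: bitstrings_def)
      ultimately show "g z * sd z (xor_bits x0 y) = g z * sd z x0" by simp
    qed
    then have "2^n * F (xor_bits x0 y) = 2^n * F x0"
      using four[OF xy] four[OF x0] restr by simp
    then have Feq: "F (xor_bits x0 y) = F x0" by simp
    have "p a0 \<le> F x0" unfolding F_def
    proof -
      have "p a0 = (if P a0 = x0 then p a0 else 0)" unfolding x0_def by simp
      also have "\<dots> \<le> (\<Sum>a\<in>I. if P a = x0 then p a else 0)"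
        by (rule member_le_sum[OF a0(1) _ finI]) (simp add: p0)
      finally show "p a0 \<le> (\<Sum>a\<in>I. if P a = x0 then p a else 0)" .
    qed
    then have "0 < F (xor_bits x0 y)" using a0(2) Feq by simp
    have "\<exists>a\<in>I. P a = xor_bits x0 y \<and> 0 < p a"
    proof (rule ccontr)
      assume "\<not> ?thesis"
      then have "\<forall>a\<in>I. (if P a = xor_bits x0 y then p a else 0) = 0"
        using p0 by (auto simp: less_eq_real_def)
      then have "F (xor_bits x0 y) = 0" unfolding F_def by (rule sum.neutral)
      then show False using \<open>0 < F (xor_bits x0 y)\<close> by simp
    qed
    then obtain a where a: "a \<in> I" "P a = xor_bits x0 y" "0 < p a" by blast
    have "2 * wt (xor_bits x0 y) = n" using wtP[OF a(1) a(3)] a(2) by simp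
    moreover have "hamming x0 y = wt (xor_bits x0 y)"
      using x0 ybs by (intro hamming_wt) (simp add: bitstrings_def)
    ultimately show "real (hamming x0 y) = real n / 2" by simp
  qed
qed


end
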